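(* Let $\mathcal{G}$ be a hereditary class of graphs (i.e., $G\in\mathcal{G}$ implies $G'\in\mathcal{G}$ for every subgraph $G'$ of $G$) such that $|E(G)|\le \ell\cdot|V(G)|$ for every $G\in\mathcal{G}$, for some constant $\ell$. Then for every $G\in\mathcal{G}$ and every terminal set $\mathcal{T}\subseteq V(G)$, $\mathrm{DegCost}^*(\mathcal{T})\le 2\ell\cdot q^*(\mathcal{T})$.
   Context: For $u\in V(G)$, $N[u]$ is $u$ together with its neighbors; for a subgraph $G'$, $N[G']=\bigcup_{u\in V(G')}N[u]$ and $\mathrm{Cost}(G')=|N[G']|$. $\mathrm{DegCost}(G')$ is the sum over nodes of $G'$ of their degrees in $G$. A Steiner tree for $\mathcal{T}$ is a tree $T\subseteq G$ with $\mathcal{T}\subseteq V(T)$. $q^*(\mathcal{T})=\min\mathrm{Cost}(T)$ and $\mathrm{DegCost}^*(\mathcal{T})=\min\mathrm{DegCost}(T)$, both minima over Steiner trees $T$ for $\mathcal{T}$. *)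

theory Defs
  imports Complex_Main
begin

type_synonym 'a graph = "'a set \<times> 'a set set"

abbreviation verts :: "'a graph \<Rightarrow> 'a set" where "verts G \<equiv> fst G"
abbreviation edges :: "'a graph \<Rightarrow> 'a set set" where "edges G \<equiv> snd G"

definition wf_graph :: "'a graph \<Rightarrow> bool" where
  "wf_graph G \<longleftrightarrow> finite (verts G) \<and>
     (\<forall>e\<in>edges G. \<exists>u v. e = {u, v} \<and> u \<noteq> v \<and> u \<in> verts G \<and> v \<in> verts G)"

definition subgraph :: "'a graph \<Rightarrow> 'a graph \<Rightarrow> bool" where
  "subgraph H G \<longleftrightarrow> wf_graph H \<and> verts H \<subseteq> verts G \<and> edges H \<subseteq> edges G"

definition hereditary :: "'a graph set \<Rightarrow> bool" where
  "hereditary \<G> \<longleftrightarrow> (\<forall>G\<in>\<G>. wf_graph G) \<and> (\<forall>G\<in>\<G>. \<forall>H. subgraph H G \<longrightarrow> H \<in> \<G>)"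

definition adj :: "'a graph \<Rightarrow> ('a \<times> 'a) set" where
  "adj G = {(u, v). {u, v} \<in> edges G}"

definition connected_graph :: "'a graph \<Rightarrow> bool" where
  "connected_graph G \<longleftrightarrow> verts G \<noteq> {} \<and>
     (\<forall>u\<in>verts G. \<forall>v\<in>verts G. (u, v) \<in> (adj G)\<^sup>*)"

definition has_cycle :: "'a graph \<Rightarrow> bool" where
  "has_cycle G \<longleftrightarrow> (\<exists>xs. length xs \<ge> 3 \<and> distinct xs \<and>
     (\<forall>i. i + 1 < length xs \<longrightarrow> {xs ! i, xs ! (i + 1)} \<in> edges G) \<and>
     {last xs, hd xs} \<in> edges G)"

definition is_tree :: "'a graph \<Rightarrow> bool" where
  "is_tree T \<longleftrightarrow> connected_graph T \<and> \<not> has_cycle T"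

definition closed_nbhd :: "'a graph \<Rightarrow> 'a \<Rightarrow> 'a set" where
  "closed_nbhd G u = insert u {v. {u, v} \<in> edges G}"

definition degree :: "'a graph \<Rightarrow> 'a \<Rightarrow> nat" where
  "degree G u = card {v. {u, v} \<in> edges G}"

definition Cost :: "'a graph \<Rightarrow> 'a graph \<Rightarrow> nat" where
  "Cost G H = card (\<Union>u\<in>verts H. closed_nbhd G u)"

definition DegCost :: "'a graph \<Rightarrow> 'a graph \<Rightarrow> nat" where
  "DegCost G H = (\<Sum>u\<in>verts H. degree G u)"

definition steiner_tree :: "'a graph \<Rightarrow> 'a set \<Rightarrow> 'a graph \<Rightarrow> bool" where
  "steiner_tree G Ts T \<longleftrightarrow> subgraph T G \<and> is_tree T \<and> Ts \<subseteq> verts T"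

definition q_star :: "'a graph \<Rightarrow> 'a set \<Rightarrow> nat" where
  "q_star G Ts = Min {Cost G T | T. steiner_tree G Ts T}"

definition DegCost_star :: "'a graph \<Rightarrow> 'a set \<Rightarrow> nat" where
  "DegCost_star G Ts = Min {DegCost G T | T. steiner_tree G Ts T}"

end

theory Submission
  imports Defs
begin

lemma wf_edges_sub: "wf_graph G \<Longrightarrow> edges G \<subseteq> Pow (verts G)"
  unfolding wf_graph_def by fastforce

lemma wf_edges_finite: "wf_graph G \<Longrightarrow> finite (edges G)"
  using wf_edges_sub[of G] unfolding wf_graph_def by (meson finite_Pow_iff finite_subset)

lemma wf_edge_card: "wf_graph G \<Longrightarrow> e \<in> edges G \<Longrightarrow> card e = 2"
  unfolding wf_graph_def by fastforce

lemma degree_alt: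
  assumes "wf_graph G"
  shows "degree G u = card {e\<in>edges G. u \<in> e}"
proof -
  have "bij_betw (\<lambda>v. {u,v}) {v. {u, v} \<in> edges G} {e\<in>edges G. u \<in> e}"
  proof (rule bij_betwI')
    fix x y assume "x \<in> {v. {u, v} \<in> edges G}" "y \<in> {v. {u, v} \<in> edges G}"
    show "({u, x} = {u, y}) = (x = y)" by (auto simp: doubleton_eq_iff)
  next
    fix x assume "x \<in> {v. {u, v} \<in> edges G}" then show "{u, x} \<in> {e \<in> edges G. u \<in> e}" by auto
  next
    fix e assume e: "e \<in> {e \<in> edges G. u \<in> e}"
    then obtain a b where "e = {a,b}" using assms unfolding wf_graph_def by blast
    with e show "\<exists>x\<in>{v. {u, v} \<in> edges G}. e = {u, x}"
      by (auto simp: insert_commute)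
  qed
  then show ?thesis unfolding degree_def by (rule bij_betw_same_card)
qed

lemma finite_steiner:
  assumes "wf_graph G"
  shows "finite {T. steiner_tree G Ts T}"
proof -
  have "{T. steiner_tree G Ts T} \<subseteq> Pow (verts G) \<times> Pow (edges G)"
    unfolding steiner_tree_def subgraph_def by auto
  moreover have "finite (Pow (verts G) \<times> Pow (edges G))"
    using assms wf_edges_finite[OF assms] unfolding wf_graph_def by auto
  ultimately show ?thesis by (rule finite_subset)
qed

theorem proposition1:
  fixes \<G> :: "'a graph set" and l :: real
  assumes "hereditary \<G>"
    and "\<forall>G\<in>\<G>. real (card (edges G)) \<le> l * real (card (verts G))"
    and "G \<in> \<G>"
    and "Ts \<subseteq> verts G"
    and "\<exists>T. steiner_tree G Ts T"
  shows "real (DegCost_star G Ts) \<le> 2 * l * real (q_star G Ts)"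
proof -
  have wf: "wf_graph G" using assms(1,3) unfolding hereditary_def by blast
  have fin: "finite {T. steiner_tree G Ts T}" by (rule finite_steiner[OF wf])
  have finC: "finite {Cost G T | T. steiner_tree G Ts T}"
    using finite_image_set[OF fin] by blast
  have finD: "finite {DegCost G T | T. steiner_tree G Ts T}"
    using finite_image_set[OF fin] by blast
  have "q_star G Ts \<in> {Cost G T | T. steiner_tree G Ts T}"
    unfolding q_star_def using assms(5) finC by (intro Min_in) auto
  then obtain T0 where st: "steiner_tree G Ts T0" and qc: "q_star G Ts = Cost G T0" by auto
  have "DegCost_star G Ts \<le> DegCost G T0"
    unfolding DegCost_star_def using finD st by (intro Min_le) (auto, metis prod.collapse)
  define S where "S = verts T0"
  have SG: "S \<subseteq> verts G" using st unfolding S_def steiner_tree_def subgraph_def by auto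
  have finS: "finite S" using SG wf unfolding wf_graph_def by (meson finite_subset)
  define E' where "E' = {e\<in>edges G. e \<inter> S \<noteq> {}}"
  define N where "N = (\<Union>u\<in>S. closed_nbhd G u)"
  have finE: "finite E'" unfolding E'_def using wf_edges_finite[OF wf] by auto
  have NG: "N \<subseteq> verts G"
    using SG wf_edges_sub[OF wf] unfolding N_def closed_nbhd_def by auto
  have wfH: "wf_graph (N, E')"
    unfolding wf_graph_def
  proof (intro conjI ballI)
    show "finite (verts (N, E'))" using NG wf unfolding wf_graph_def by (simp add: finite_subset)
  next
    fix e assume "e \<in> edges (N, E')"
    then have e: "e \<in> edges G" "e \<inter> S \<noteq> {}" unfolding E'_def by auto
    then obtain a b where ab: "e = {a,b}" "a \<noteq> b" using wf unfolding wf_graph_def by blast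
    have "a \<in> N \<and> b \<in> N"
    proof (cases "a \<in> S")
      case True
      then show ?thesis using e ab unfolding N_def closed_nbhd_def by auto
    next
      case False
      then have "b \<in> S" using e ab by auto
      then show ?thesis using e ab unfolding N_def closed_nbhd_def by (auto simp: insert_commute) (metis insert_commute)
    qed
    then show "\<exists>u v. e = {u, v} \<and> u \<noteq> v \<and> u \<in> verts (N, E') \<and> v \<in> verts (N, E')"
      using ab by auto
  qed
  have "subgraph (N, E') G" unfolding subgraph_def using wfH NG E'_def by auto
  then have "(N, E') \<in> \<G>" using assms(1,3) unfolding hereditary_def by blast
  then have cE: "real (card E') \<le> l * real (card N)" using assms(2) by auto
  have "DegCost G T0 = (\<Sum>u\<in>S. card {e\<in>E'. u \<in> e})"
    unfolding DegCost_def S_def[symmetric] degree_alt[OF wf]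
    by (rule sum.cong) (auto simp: E'_def intro!: arg_cong[where f=card])
  also have "\<dots> = (\<Sum>u\<in>S. \<Sum>e\<in>E'. if u \<in> e then 1 else 0)"
    using finE by (simp add: sum.If_cases Int_def conj_commute)
  also have "\<dots> = (\<Sum>e\<in>E'. \<Sum>u\<in>S. if u \<in> e then 1 else 0)"
    by (rule sum.swap)
  also have "\<dots> = (\<Sum>e\<in>E'. card (S \<inter> e))"
    using finS by (simp add: sum.If_cases Int_def)
  also have "\<dots> \<le> (\<Sum>e\<in>E'. 2)"
  proof (rule sum_mono)
    fix e assume "e \<in> E'"
    then have "e \<in> edges G" unfolding E'_def by auto
    then have "card e = 2" "finite e" using wf_edge_card[OF wf] by (auto intro: card_ge_0_finite)
    then show "card (S \<inter> e) \<le> 2" by (metis card_mono inf_le2)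
  qed
  also have "\<dots> = 2 * card E'" by simp
  finally have "DegCost G T0 \<le> 2 * card E'" .
  have "Cost G T0 = card N" unfolding Cost_def N_def S_def by simp
  have "real (DegCost_star G Ts) \<le> real (DegCost G T0)" using \<open>DegCost_star G Ts \<le> DegCost G T0\<close> by simp
  also have "\<dots> \<le> 2 * real (card E')" using \<open>DegCost G T0 \<le> 2 * card E'\<close> by linarith
  also have "\<dots> \<le> 2 * (l * real (card N))" using cE by linarith
  finally show ?thesis using qc \<open>Cost G T0 = card N\<close> by simp
qed

end
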